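(* Let $(g(x))_{x\ge0}$ be a semigroup of linear maps on a real finite-dimensional vector space $V$. Then there exists a decomposition $V=\bigoplus_{i=1}^n V_i$ with $\dim V_i\ge1$ such that each $V_i$ is $g(x)$-invariant for all $x\ge0$, and for each $i$ one of the following holds: (1) for every $x\ge0$, $g(x)|_{V_i}$ has exactly one eigenvalue $\lambda(x)$ (over $\mathbb C$), and $\lambda(x)$ is real with $\lambda(x)\ge0$; or (2) for every $x\ge0$, the set of (complex) eigenvalues of $g(x)|_{V_i}$ is contained in $\{\lambda(x),\overline{\lambda(x)}\}$ for some $\lambda(x)\in\mathbb C$, and $\lambda(x)\notin\mathbb R$ for at least one $x\ge0$.
   Context: A semigroup is a map $g:[0,\infty)\to L(V)$ with $g(0)=\mathrm{id}$ and $g(x+y)=g(x)g(y)$ for all $x,y\ge0$, where $L(V)$ denotes the linear maps $V\to V$. *)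

theory Defs
  imports "HOL-Analysis.Analysis"
begin

definition lin_semigroup :: "(real \<Rightarrow> 'a::real_vector \<Rightarrow> 'a) \<Rightarrow> bool" where
  "lin_semigroup g \<longleftrightarrow> (\<forall>x\<ge>0. linear (g x)) \<and> g 0 = id \<and>
     (\<forall>x\<ge>0. \<forall>y\<ge>0. g (x + y) = g x \<circ> g y)"

text \<open>mu is a (complex) eigenvalue of the restriction of the real linear map A to the
  invariant subspace W, i.e. an eigenvalue of the complexification of A restricted to W:
  there is a nonzero u + i w (u, w in W) with A(u + i w) = mu (u + i w).\<close>
definition complex_eigenvalue_on :: "('a::real_vector \<Rightarrow> 'a) \<Rightarrow> 'a set \<Rightarrow> complex \<Rightarrow> bool" where
  "complex_eigenvalue_on A W \<mu> \<longleftrightarrow>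
     (\<exists>u w. u \<in> W \<and> w \<in> W \<and> (u \<noteq> 0 \<or> w \<noteq> 0) \<and>
        A u = Re \<mu> *\<^sub>R u - Im \<mu> *\<^sub>R w \<and>
        A w = Im \<mu> *\<^sub>R u + Re \<mu> *\<^sub>R w)"

definition is_direct_sum :: "nat \<Rightarrow> (nat \<Rightarrow> 'a::real_vector set) \<Rightarrow> bool" where
  "is_direct_sum n Vs \<longleftrightarrow> (\<forall>i<n. subspace (Vs i)) \<and>
     (\<forall>v. \<exists>!f. (\<forall>i<n. f i \<in> Vs i) \<and> (\<forall>i\<ge>n. f i = 0) \<and> v = (\<Sum>i<n. f i))"

end

theory Submission
  imports Defs
begin


lemma linear_funpow: "linear (T::'a::real_vector\<Rightarrow>'a) \<Longrightarrow> linear (T ^^ k)"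
proof (induction k)
  case 0 have "T ^^ 0 = id" by simp
  thus ?case using real_vector.linear_id by metis
next
  case (Suc k) thus ?case by (simp add: linear_compose del: o_apply)
qed

lemma chain_incr_stab:
  fixes S :: "nat \<Rightarrow> 'a::euclidean_space set"
  assumes sub: "\<And>k. subspace (S k)" and mono: "\<And>k. S k \<subseteq> S (Suc k)"
    and stp: "\<And>k. S k = S (Suc k) \<Longrightarrow> S (Suc k) = S (Suc (Suc k))"
  shows "\<And>m. m \<ge> DIM('a) \<Longrightarrow> S m = S DIM('a)"
proof -
  have ex: "\<exists>k\<le>DIM('a). S k = S (Suc k)"
  proof (rule ccontr)
    assume "\<not> ?thesis"
    hence ne: "\<And>k. k \<le> DIM('a) \<Longrightarrow> S k \<subset> S (Suc k)" using mono by blast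
    have "\<And>k. k \<le> Suc DIM('a) \<Longrightarrow> dim (S k) \<ge> k"
    proof -
      fix k show "k \<le> Suc DIM('a) \<Longrightarrow> dim (S k) \<ge> k"
      proof (induction k)
        case (Suc k)
        hence "S k \<subset> S (Suc k)" using ne by simp
        hence "dim (S k) < dim (S (Suc k))" using sub by (metis dim_psubset span_eq_iff)
        with Suc show ?case by simp
      qed simp
    qed
    hence "dim (S (Suc DIM('a))) \<ge> Suc DIM('a)" by simp
    moreover have "dim (S (Suc DIM('a))) \<le> DIM('a)" by (rule dim_subset_UNIV)
    ultimately show False by simp
  qed
  then obtain k where k: "k \<le> DIM('a)" "S k = S (Suc k)" by blast
  have all: "\<And>j. S (k + j) = S k \<and> S (k + j) = S (Suc (k + j))"
  proof -
    fix j show "S (k + j) = S k \<and> S (k + j) = S (Suc (k + j))"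
    proof (induction j)
      case (Suc j)
      have "S (Suc (k + j)) = S (Suc (Suc (k + j)))" by (rule stp[OF conjunct2[OF Suc.IH]])
      thus ?case using Suc.IH by (metis add_Suc_right)
    qed (use k in simp)
  qed
  fix m assume "m \<ge> DIM('a)"
  then show "S m = S DIM('a)" using all[of "m - k"] all[of "DIM('a) - k"] k by (metis le_add_diff_inverse le_trans)
qed

lemma chain_decr_stab:
  fixes S :: "nat \<Rightarrow> 'a::euclidean_space set"
  assumes sub: "\<And>k. subspace (S k)" and mono: "\<And>k. S (Suc k) \<subseteq> S k"
    and stp: "\<And>k. S k = S (Suc k) \<Longrightarrow> S (Suc k) = S (Suc (Suc k))"
  shows "\<And>m. m \<ge> DIM('a) \<Longrightarrow> S m = S DIM('a)"
proof -
  have ex: "\<exists>k\<le>DIM('a). S k = S (Suc k)"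
  proof (rule ccontr)
    assume "\<not> ?thesis"
    hence ne: "\<And>k. k \<le> DIM('a) \<Longrightarrow> S (Suc k) \<subset> S k" using mono by blast
    have "\<And>k. k \<le> Suc DIM('a) \<Longrightarrow> dim (S k) + k \<le> DIM('a)"
    proof -
      fix k show "k \<le> Suc DIM('a) \<Longrightarrow> dim (S k) + k \<le> DIM('a)"
      proof (induction k)
        case 0 show ?case using dim_subset_UNIV by simp
      next
        case (Suc k)
        hence "S (Suc k) \<subset> S k" using ne by simp
        hence "dim (S (Suc k)) < dim (S k)" using sub by (metis dim_psubset span_eq_iff)
        with Suc show ?case by simp
      qed
    qed
    from this[of "Suc DIM('a)"] show False by simp
  qed
  then obtain k where k: "k \<le> DIM('a)" "S k = S (Suc k)" by blast
  have all: "\<And>j. S (k + j) = S k \<and> S (k + j) = S (Suc (k + j))"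
  proof -
    fix j show "S (k + j) = S k \<and> S (k + j) = S (Suc (k + j))"
    proof (induction j)
      case (Suc j)
      have "S (Suc (k + j)) = S (Suc (Suc (k + j)))" by (rule stp[OF conjunct2[OF Suc.IH]])
      thus ?case using Suc.IH by (metis add_Suc_right)
    qed (use k in simp)
  qed
  fix m assume "m \<ge> DIM('a)"
  then show "S m = S DIM('a)" using all[of "m - k"] all[of "DIM('a) - k"] k by (metis le_add_diff_inverse le_trans)
qed



lemma fitting:
  fixes T :: "'a::euclidean_space \<Rightarrow> 'a"
  assumes lin: "linear T" and W: "subspace W" and TW: "T ` W \<subseteq> W"
  defines "K \<equiv> {v\<in>W. (T ^^ DIM('a)) v = 0}" and "R \<equiv> (T ^^ DIM('a)) ` W"
  shows "subspace K" "subspace R" "K \<subseteq> W" "R \<subseteq> W" "K \<inter> R \<subseteq> {0}"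
    "\<forall>v\<in>W. \<exists>k\<in>K. \<exists>r\<in>R. v = k + r"
proof -
  define N where "N = DIM('a)"
  have linp: "\<And>k. linear (T ^^ k)" using lin by (rule linear_funpow)
  have TkW: "\<And>k. (T ^^ k) ` W \<subseteq> W"
  proof -
    fix k show "(T ^^ k) ` W \<subseteq> W"
      by (induction k) (use TW in \<open>auto simp: image_comp[symmetric]\<close>)
  qed
  define Kc where "Kc k = {v\<in>W. (T ^^ k) v = 0}" for k
  define Rc where "Rc k = (T ^^ k) ` W" for k
  have subK: "subspace (Kc k)" for k
  proof -
    have "Kc k = W \<inter> {v. (T ^^ k) v = 0}" unfolding Kc_def by auto
    moreover have "subspace {v. (T ^^ k) v = 0}"
      unfolding subspace_def using linear_0[OF linp] linear_add[OF linp] linear_scale[OF linp] by simp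
    ultimately show ?thesis using subspace_inter[OF W] by simp
  qed
  have subR: "subspace (Rc k)" for k
    unfolding Rc_def using real_vector.linear_subspace_image[OF linp W] by simp
  have monoK: "Kc k \<subseteq> Kc (Suc k)" for k
    unfolding Kc_def using linear_0[OF lin] by auto
  have stK: "Kc (Suc k) = Kc (Suc (Suc k))" if "Kc k = Kc (Suc k)" for k
  proof
    show "Kc (Suc k) \<subseteq> Kc (Suc (Suc k))" by (rule monoK)
    show "Kc (Suc (Suc k)) \<subseteq> Kc (Suc k)"
    proof
      fix v assume "v \<in> Kc (Suc (Suc k))"
      hence v: "v \<in> W" "(T ^^ Suc (Suc k)) v = 0" unfolding Kc_def by auto
      have "T v \<in> Kc (Suc k)" using v TW unfolding Kc_def by (auto simp: funpow_Suc_right simp del: funpow.simps)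
      hence "T v \<in> Kc k" using that by simp
      thus "v \<in> Kc (Suc k)" using v unfolding Kc_def by (auto simp: funpow_Suc_right simp del: funpow.simps)
    qed
  qed
  have monoR: "Rc (Suc k) \<subseteq> Rc k" for k
    unfolding Rc_def using TW by (auto simp: funpow_Suc_right simp del: funpow.simps)
  have stR: "Rc (Suc k) = Rc (Suc (Suc k))" if "Rc k = Rc (Suc k)" for k
  proof -
    have "Rc (Suc k) = T ` Rc k" unfolding Rc_def by (simp add: image_comp)
    also have "\<dots> = T ` Rc (Suc k)" using that by simp
    also have "\<dots> = Rc (Suc (Suc k))" unfolding Rc_def by (simp add: image_comp)
    finally show ?thesis .
  qed
  have K2: "Kc (N + N) = Kc N"
    using chain_incr_stab[of Kc, OF subK monoK stK, of "N+N"] unfolding N_def by simp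
  have R2: "Rc (N + N) = Rc N"
    using chain_decr_stab[of Rc, OF subR monoR stR, of "N+N"] unfolding N_def by simp
  have KK: "K = Kc N" and RR: "R = Rc N" unfolding K_def R_def Kc_def Rc_def N_def by auto
  show "subspace K" using subK KK by simp
  show "subspace R" using subR RR by simp
  show "K \<subseteq> W" unfolding K_def by auto
  show "R \<subseteq> W" unfolding R_def using TkW by auto
  show "K \<inter> R \<subseteq> {0}"
  proof
    fix v assume "v \<in> K \<inter> R"
    then obtain w where w: "w \<in> W" "v = (T ^^ N) w" "(T ^^ N) v = 0"
      unfolding KK RR Kc_def Rc_def by auto
    hence "(T ^^ (N + N)) w = 0" by (simp add: funpow_add)
    hence "w \<in> Kc (N+N)" using w unfolding Kc_def by simp
    hence "w \<in> Kc N" using K2 by simp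
    thus "v \<in> {0}" using w unfolding Kc_def by simp
  qed
  show "\<forall>v\<in>W. \<exists>k\<in>K. \<exists>r\<in>R. v = k + r"
  proof
    fix v assume v: "v \<in> W"
    hence "(T ^^ N) v \<in> Rc (N+N)" using R2 unfolding Rc_def by auto
    then obtain w where w: "w \<in> W" "(T ^^ N) v = (T ^^ (N+N)) w" unfolding Rc_def by auto
    define r where "r = (T ^^ N) w"
    have r: "r \<in> R" unfolding RR Rc_def r_def using w by auto
    have rW: "r \<in> W" using r TkW unfolding RR Rc_def by auto
    have "(T ^^ N) (v - r) = 0" using w unfolding r_def
      by (simp add: funpow_add linear_diff[OF linp])
    hence "v - r \<in> K" unfolding KK Kc_def using v rW subspace_diff[OF W] by simp
    thus "\<exists>k\<in>K. \<exists>r\<in>R. v = k + r" using r by (intro bexI[of _ "v - r"] bexI[of _ r]) auto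
  qed
qed



definition epair :: "('a::real_vector \<Rightarrow> 'a) \<Rightarrow> complex \<Rightarrow> 'a \<Rightarrow> 'a \<Rightarrow> bool" where
  "epair L c u w \<longleftrightarrow> L u = Re c *\<^sub>R u - Im c *\<^sub>R w \<and> L w = Im c *\<^sub>R u + Re c *\<^sub>R w"

lemma cev_iff: "complex_eigenvalue_on A W \<mu> \<longleftrightarrow>
   (\<exists>u w. u \<in> W \<and> w \<in> W \<and> (u \<noteq> 0 \<or> w \<noteq> 0) \<and> epair A \<mu> u w)"
  unfolding complex_eigenvalue_on_def epair_def by simp

definition pq :: "complex \<Rightarrow> complex \<Rightarrow> complex" where
  "pq \<mu> \<nu> = \<nu> * \<nu> - of_real (2 * Re \<mu>) * \<nu> + of_real ((cmod \<mu>)\<^sup>2)"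

lemma cmod_sq: "cmod \<mu> * cmod \<mu> = Im \<mu> * Im \<mu> + Re \<mu> * Re \<mu>"
  by (metis cmod_power2 power2_eq_square add.commute)

lemma pq_zero: "pq \<mu> \<nu> = 0 \<Longrightarrow> \<nu> = \<mu> \<or> \<nu> = cnj \<mu>"
proof -
  assume "pq \<mu> \<nu> = 0"
  moreover have "pq \<mu> \<nu> = (\<nu> - \<mu>) * (\<nu> - cnj \<mu>)"
    unfolding pq_def
    by (simp add: complex_eq_iff algebra_simps cmod_sq power2_eq_square)
  ultimately show ?thesis by simp
qed

lemma pq_self: "pq \<mu> \<mu> = 0"
  unfolding pq_def by (simp add: complex_eq_iff algebra_simps cmod_sq power2_eq_square)

lemma epair_quad:
  assumes lin: "linear A" and e: "epair A \<nu> u w"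
  shows "epair (\<lambda>v. A (A v) - (2 * Re \<mu>) *\<^sub>R A v + ((cmod \<mu>)\<^sup>2) *\<^sub>R v) (pq \<mu> \<nu>) u w"
proof -
  have Au: "A u = Re \<nu> *\<^sub>R u - Im \<nu> *\<^sub>R w" and Aw: "A w = Im \<nu> *\<^sub>R u + Re \<nu> *\<^sub>R w"
    using e unfolding epair_def by auto
  have AAu: "A (A u) = Re \<nu> *\<^sub>R (Re \<nu> *\<^sub>R u - Im \<nu> *\<^sub>R w) - Im \<nu> *\<^sub>R (Im \<nu> *\<^sub>R u + Re \<nu> *\<^sub>R w)"
    using Au Aw by (simp add: linear_diff[OF lin] linear_scale[OF lin])
  have AAw: "A (A w) = Im \<nu> *\<^sub>R (Re \<nu> *\<^sub>R u - Im \<nu> *\<^sub>R w) + Re \<nu> *\<^sub>R (Im \<nu> *\<^sub>R u + Re \<nu> *\<^sub>R w)"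
    using Au Aw by (simp add: linear_add[OF lin] linear_scale[OF lin])
  show ?thesis unfolding epair_def
    apply (simp only: AAu AAw)
    apply (simp only: Au Aw)
    apply (simp add: pq_def algebra_simps power2_eq_square cmod_sq)
    by (simp add: scaleR_add_left[symmetric])
qed

lemma epair_pow:
  assumes lin: "linear T" and e: "epair T c u w"
  shows "epair (T ^^ k) (c ^ k) u w"
proof (induction k)
  case 0 thus ?case unfolding epair_def by simp
next
  case (Suc k)
  have a: "(T ^^ k) u = Re (c^k) *\<^sub>R u - Im (c^k) *\<^sub>R w" "(T ^^ k) w = Im (c^k) *\<^sub>R u + Re (c^k) *\<^sub>R w"
    using Suc unfolding epair_def by auto
  have Tu: "T u = Re c *\<^sub>R u - Im c *\<^sub>R w" and Tw: "T w = Im c *\<^sub>R u + Re c *\<^sub>R w"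
    using e unfolding epair_def by auto
  show ?case unfolding epair_def funpow.simps(2) o_apply a power_Suc2
    by (simp add: linear_diff[OF lin] linear_add[OF lin] linear_scale[OF lin] Tu Tw algebra_simps)
qed

lemma epair_kill:
  assumes e: "epair L c u w" and "L u = 0" "L w = 0" and c: "c \<noteq> 0"
  shows "u = 0 \<and> w = 0"
proof -
  have 1: "Re c *\<^sub>R u - Im c *\<^sub>R w = 0" and 2: "Im c *\<^sub>R u + Re c *\<^sub>R w = 0"
    using assms unfolding epair_def by auto
  have "Re c *\<^sub>R (Re c *\<^sub>R u - Im c *\<^sub>R w) + Im c *\<^sub>R (Im c *\<^sub>R u + Re c *\<^sub>R w) = 0"
    using 1 2 by simp
  hence "((Re c)\<^sup>2 + (Im c)\<^sup>2) *\<^sub>R u = 0" by (simp add: algebra_simps power2_eq_square)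
  moreover have "(Re c)\<^sup>2 + (Im c)\<^sup>2 \<noteq> 0" using c by (simp add: complex_eq_iff add_nonneg_eq_0_iff)
  ultimately have u: "u = 0" using scaleR_eq_0_iff by blast
  have "Re c *\<^sub>R (Im c *\<^sub>R u + Re c *\<^sub>R w) - Im c *\<^sub>R (Re c *\<^sub>R u - Im c *\<^sub>R w) = 0"
    using 1 2 by simp
  hence "((Re c)\<^sup>2 + (Im c)\<^sup>2) *\<^sub>R w = 0" by (simp add: algebra_simps power2_eq_square)
  hence "w = 0" using \<open>(Re c)\<^sup>2 + (Im c)\<^sup>2 \<noteq> 0\<close> scaleR_eq_0_iff by blast
  with u show ?thesis by simp
qed



definition decomp :: "'a::real_vector set \<Rightarrow> nat \<Rightarrow> (nat \<Rightarrow> 'a set) \<Rightarrow> bool" where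
  "decomp W n Vs \<longleftrightarrow> (\<forall>i<n. subspace (Vs i) \<and> Vs i \<subseteq> W) \<and>
     (\<forall>v\<in>W. \<exists>f. (\<forall>i<n. f i \<in> Vs i) \<and> v = (\<Sum>i<n. f i)) \<and>
     (\<forall>f. (\<forall>i<n. f i \<in> Vs i) \<longrightarrow> (\<Sum>i<n. f i) = 0 \<longrightarrow> (\<forall>i<n. f i = 0))"

lemma sum_split_add: "(\<Sum>i<n1+n2. f i) = (\<Sum>i<n1. f i) + (\<Sum>i<n2. f (n1 + i))"
  for f :: "nat \<Rightarrow> 'b::comm_monoid_add"
  by (induction n2) (simp_all add: add.assoc)

lemma decomp_single: "subspace W \<Longrightarrow> decomp W 1 (\<lambda>i. W)"
  unfolding decomp_def
proof (intro conjI)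
  show "\<forall>v\<in>W. \<exists>f. (\<forall>i<(1::nat). f i \<in> W) \<and> v = (\<Sum>i<(1::nat). f i)"
  proof
    fix v assume "v \<in> W" thus "\<exists>f. (\<forall>i<(1::nat). f i \<in> W) \<and> v = (\<Sum>i<(1::nat). f i)"
      by (intro exI[of _ "\<lambda>i. v"]) (simp add: sum_constant_scaleR card_lessThan)
  qed
qed auto

lemma decomp_combine:
  assumes sK: "subspace K" and sR: "subspace R" and KR: "K \<inter> R \<subseteq> {0}"
    and KW: "K \<subseteq> W" and RW: "R \<subseteq> W"
    and sum: "\<forall>v\<in>W. \<exists>k\<in>K. \<exists>r\<in>R. v = k + r"
    and d1: "decomp K n1 V1" and d2: "decomp R n2 V2"
  shows "decomp W (n1 + n2) (\<lambda>i. if i < n1 then V1 i else V2 (i - n1))"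
proof -
  note d1' = d1[unfolded decomp_def] and d2' = d2[unfolded decomp_def]
  have d1a: "\<forall>i<n1. subspace (V1 i) \<and> V1 i \<subseteq> K" using d1' by (rule conjunct1)
  have d1b: "\<forall>v\<in>K. \<exists>f. (\<forall>i<n1. f i \<in> V1 i) \<and> v = (\<Sum>i<n1. f i)" using d1' by (rule conjunct2[THEN conjunct1])
  have d1c: "\<forall>f. (\<forall>i<n1. f i \<in> V1 i) \<longrightarrow> (\<Sum>i<n1. f i) = 0 \<longrightarrow> (\<forall>i<n1. f i = 0)" using d1' by (rule conjunct2[THEN conjunct2])
  have d2a: "\<forall>i<n2. subspace (V2 i) \<and> V2 i \<subseteq> R" using d2' by (rule conjunct1)
  have d2b: "\<forall>v\<in>R. \<exists>f. (\<forall>i<n2. f i \<in> V2 i) \<and> v = (\<Sum>i<n2. f i)" using d2' by (rule conjunct2[THEN conjunct1])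
  have d2c: "\<forall>f. (\<forall>i<n2. f i \<in> V2 i) \<longrightarrow> (\<Sum>i<n2. f i) = 0 \<longrightarrow> (\<forall>i<n2. f i = 0)" using d2' by (rule conjunct2[THEN conjunct2])
  let ?V = "\<lambda>i. if i < n1 then V1 i else V2 (i - n1)"
  have A: "\<forall>i<n1+n2. subspace (?V i) \<and> ?V i \<subseteq> W"
  proof (intro allI impI)
    fix i assume i: "i < n1 + n2"
    show "subspace (?V i) \<and> ?V i \<subseteq> W"
    proof (cases "i < n1")
      case True
      hence "subspace (V1 i) \<and> V1 i \<subseteq> K" using d1a by simp
      thus ?thesis using True KW by auto
    next
      case False
      hence "i - n1 < n2" using i by simp
      hence "subspace (V2 (i - n1)) \<and> V2 (i - n1) \<subseteq> R" using d2a by simp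
      thus ?thesis using False RW by auto
    qed
  qed
  have B: "\<forall>v\<in>W. \<exists>f. (\<forall>i<n1+n2. f i \<in> ?V i) \<and> v = (\<Sum>i<n1+n2. f i)"
  proof
    fix v assume "v \<in> W"
    then obtain k r where kr: "k \<in> K" "r \<in> R" "v = k + r" using sum by blast
    obtain f1 where f1: "\<forall>i<n1. f1 i \<in> V1 i" "k = (\<Sum>i<n1. f1 i)" using d1b kr(1) by blast
    obtain f2 where f2: "\<forall>i<n2. f2 i \<in> V2 i" "r = (\<Sum>i<n2. f2 i)" using d2b kr(2) by blast
    define f where "f i = (if i < n1 then f1 i else f2 (i - n1))" for i
    have "(\<Sum>i<n1+n2. f i) = (\<Sum>i<n1. f i) + (\<Sum>i<n2. f (n1 + i))" by (rule sum_split_add)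
    also have "(\<Sum>i<n1. f i) = k" unfolding f1 f_def by simp
    also have "(\<Sum>i<n2. f (n1 + i)) = r" unfolding f2 f_def by simp
    finally have "v = (\<Sum>i<n1+n2. f i)" using kr by simp
    moreover have "\<forall>i<n1+n2. f i \<in> ?V i"
    proof (intro allI impI)
      fix i assume "i < n1 + n2"
      thus "f i \<in> ?V i" using f1 f2 unfolding f_def by (cases "i < n1") simp_all
    qed
    ultimately show "\<exists>f. (\<forall>i<n1+n2. f i \<in> ?V i) \<and> v = (\<Sum>i<n1+n2. f i)" by blast
  qed
  have C: "\<forall>f. (\<forall>i<n1+n2. f i \<in> ?V i) \<longrightarrow> (\<Sum>i<n1+n2. f i) = 0 \<longrightarrow> (\<forall>i<n1+n2. f i = 0)"
  proof (intro allI impI)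
    fix f i assume f: "\<forall>i<n1+n2. f i \<in> ?V i" and s: "(\<Sum>i<n1+n2. f i) = 0" and i: "i < n1 + n2"
    have f1: "\<forall>j<n1. f j \<in> V1 j"
    proof (intro allI impI)
      fix j assume "j < n1" thus "f j \<in> V1 j" using f[rule_format, of j] by simp
    qed
    have f2: "\<forall>j<n2. f (n1 + j) \<in> V2 j"
    proof (intro allI impI)
      fix j assume "j < n2" thus "f (n1 + j) \<in> V2 j" using f[rule_format, of "n1 + j"] by simp
    qed
    have kK: "(\<Sum>j<n1. f j) \<in> K"
    proof (rule real_vector.subspace_sum[OF sK])
      fix j assume "j \<in> {..<n1}" thus "f j \<in> K" using f1 d1a by blast
    qed
    have rR: "(\<Sum>j<n2. f (n1 + j)) \<in> R"
    proof (rule real_vector.subspace_sum[OF sR])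
      fix j assume "j \<in> {..<n2}" thus "f (n1 + j) \<in> R" using f2 d2a by blast
    qed
    have e: "(\<Sum>j<n1. f j) + (\<Sum>j<n2. f (n1 + j)) = 0" using s sum_split_add[where f=f and ?n1.0=n1 and ?n2.0=n2] by simp
    hence "(\<Sum>j<n1. f j) = - (\<Sum>j<n2. f (n1 + j))" by (simp add: eq_neg_iff_add_eq_0)
    hence "(\<Sum>j<n1. f j) \<in> R" using rR real_vector.subspace_neg[OF sR] by simp
    hence z1: "(\<Sum>j<n1. f j) = 0" using kK KR by auto
    hence z2: "(\<Sum>j<n2. f (n1 + j)) = 0" using e by simp
    show "f i = 0"
    proof (cases "i < n1")
      case True
      have "\<forall>j<n1. f j = 0" using spec[OF d1c, of f] f1 z1 by blast
      thus ?thesis using True by simp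
    next
      case False
      have "\<forall>j<n2. f (n1 + j) = 0" using spec[OF d2c, of "\<lambda>j. f (n1 + j)"] f2 z2 by blast
      moreover have "i = n1 + (i - n1)" "i - n1 < n2" using False i by simp_all
      ultimately show ?thesis by metis
    qed
  qed
  show ?thesis unfolding decomp_def using A B C by (intro conjI)
qed

lemma decomp_direct:
  assumes "decomp UNIV n Vs" shows "is_direct_sum n Vs"
  unfolding is_direct_sum_def
proof (rule conjI)
  show "\<forall>i<n. subspace (Vs i)" using assms unfolding decomp_def by blast
next
  show "\<forall>v. \<exists>!f. (\<forall>i<n. f i \<in> Vs i) \<and> (\<forall>i\<ge>n. f i = 0) \<and> v = (\<Sum>i<n. f i)"
  proof
  fix v
  obtain f where f: "\<forall>i<n. f i \<in> Vs i" "v = (\<Sum>i<n. f i)" using assms unfolding decomp_def by blast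
  define f' where "f' i = (if i < n then f i else 0)" for i
  have ex: "(\<forall>i<n. f' i \<in> Vs i) \<and> (\<forall>i\<ge>n. f' i = 0) \<and> v = (\<Sum>i<n. f' i)"
    using f unfolding f'_def by auto
  show "\<exists>!f. (\<forall>i<n. f i \<in> Vs i) \<and> (\<forall>i\<ge>n. f i = 0) \<and> v = (\<Sum>i<n. f i)"
  proof (rule ex1I[of _ f'])
    show "(\<forall>i<n. f' i \<in> Vs i) \<and> (\<forall>i\<ge>n. f' i = 0) \<and> v = (\<Sum>i<n. f' i)" by (rule ex)
    fix h assume h: "(\<forall>i<n. h i \<in> Vs i) \<and> (\<forall>i\<ge>n. h i = 0) \<and> v = (\<Sum>i<n. h i)"
    have hA: "\<forall>i<n. h i - f' i \<in> Vs i"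
    proof (intro allI impI)
      fix i assume "i < n"
      moreover have "\<forall>i<n. subspace (Vs i)" using assms unfolding decomp_def by blast
      ultimately show "h i - f' i \<in> Vs i" using h ex real_vector.subspace_diff by blast
    qed
    have hB: "(\<Sum>i<n. h i - f' i) = 0"
    proof -
      have "(\<Sum>i<n. h i - f' i) = (\<Sum>i<n. h i) - (\<Sum>i<n. f' i)" by (rule sum_subtractf)
      thus ?thesis using h ex by simp
    qed
    have indep: "\<forall>f. (\<forall>i<n. f i \<in> Vs i) \<longrightarrow> (\<Sum>i<n. f i) = 0 \<longrightarrow> (\<forall>i<n. f i = 0)"
      using assms unfolding decomp_def by (elim conjE)
    have hf: "\<forall>i<n. h i - f' i = 0" using indep[rule_format, of "\<lambda>i. h i - f' i"] hA hB by blast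
    show "h = f'"
    proof
      fix i show "h i = f' i"
      proof (cases "i < n")
        case True thus ?thesis using hf by simp
      next
        case False thus ?thesis using h ex by simp
      qed
    qed
  qed
  qed
qed



definition good :: "(real \<Rightarrow> 'a::real_vector \<Rightarrow> 'a) \<Rightarrow> 'a set \<Rightarrow> bool" where
  "good g V \<longleftrightarrow> subspace V \<and> V \<noteq> {0} \<and> (\<forall>x\<ge>0. g x ` V \<subseteq> V) \<and>
     (\<forall>x\<ge>0. \<exists>\<mu>. \<forall>\<nu>. complex_eigenvalue_on (g x) V \<nu> \<longrightarrow> \<nu> = \<mu> \<or> \<nu> = cnj \<mu>)"

lemma sg_commute:
  assumes "lin_semigroup g" "x \<ge> 0" "y \<ge> 0"
  shows "g y (g x v) = g x (g y v)"
proof -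
  have "g (x + y) = g x \<circ> g y" "g (y + x) = g y \<circ> g x"
    using assms unfolding lin_semigroup_def by auto
  thus ?thesis by (metis add.commute comp_apply)
qed

lemma sg_linear: "lin_semigroup g \<Longrightarrow> x \<ge> 0 \<Longrightarrow> linear (g x)"
  unfolding lin_semigroup_def by auto

lemma quad_linear:
  assumes lin: "linear A"
  shows "linear (\<lambda>v. A (A v) - a *\<^sub>R A v + b *\<^sub>R v)"
  unfolding linear_iff
  by (simp add: linear_add[OF lin] linear_scale[OF lin] algebra_simps)

lemma main_ind:
  fixes g :: "real \<Rightarrow> 'a::euclidean_space \<Rightarrow> 'a"
  assumes sg: "lin_semigroup g"
  shows "subspace W \<Longrightarrow> W \<noteq> {0} \<Longrightarrow> (\<forall>x\<ge>0. g x ` W \<subseteq> W) \<Longrightarrow>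
    \<exists>n Vs. decomp W n Vs \<and> (\<forall>i<n. good g (Vs i))"
proof (induction "dim W" arbitrary: W rule: less_induct)
  case less
  note sW = less.prems(1) and nz = less.prems(2) and inv = less.prems(3)
  show ?case
  proof (cases "\<forall>x\<ge>0. \<exists>\<mu>. \<forall>\<nu>. complex_eigenvalue_on (g x) W \<nu> \<longrightarrow> \<nu> = \<mu> \<or> \<nu> = cnj \<mu>")
    case True
    have "decomp W 1 (\<lambda>i. W)" using sW by (rule decomp_single)
    moreover have "good g W" unfolding good_def using sW nz inv True by blast
    ultimately show ?thesis by blast
  next
    case False
    then obtain x where x: "x \<ge> 0"
      and bad: "\<And>\<mu>. \<exists>\<nu>. complex_eigenvalue_on (g x) W \<nu> \<and> \<nu> \<noteq> \<mu> \<and> \<nu> \<noteq> cnj \<mu>" by blast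
    obtain \<mu>0 where ev0: "complex_eigenvalue_on (g x) W \<mu>0" using bad[of 0] by blast
    define A where "A = g x"
    have linA: "linear A" unfolding A_def using sg x by (rule sg_linear)
    define T where "T = (\<lambda>v. A (A v) - (2 * Re \<mu>0) *\<^sub>R A v + ((cmod \<mu>0)\<^sup>2) *\<^sub>R v)"
    have linT: "linear T" unfolding T_def using linA by (rule quad_linear)
    have AW: "A v \<in> W" if "v \<in> W" for v using inv x that unfolding A_def by blast
    have TW: "T ` W \<subseteq> W"
    proof
      fix z assume "z \<in> T ` W"
      then obtain v where v: "v \<in> W" "z = T v" by blast
      show "z \<in> W" unfolding v T_def
        using AW[OF AW[OF v(1)]] AW[OF v(1)] v(1) sW
        by (intro real_vector.subspace_add real_vector.subspace_diff real_vector.subspace_scale) auto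
    qed
    define N where "N = DIM('a)"
    define K where "K = {v\<in>W. (T ^^ N) v = 0}"
    define R where "R = (T ^^ N) ` W"
    note F = fitting[OF linT sW TW, folded N_def, folded K_def R_def]
    have Npos: "N > 0" unfolding N_def by simp
    have linTN: "linear (T ^^ N)" using linT by (rule linear_funpow)
    have gT: "g y (T v) = T (g y v)" if y: "y \<ge> 0" for y v
    proof -
      have ly: "linear (g y)" using sg y by (rule sg_linear)
      have c: "g y (A u) = A (g y u)" for u unfolding A_def using sg_commute[OF sg x y] .
      show ?thesis unfolding T_def
        by (simp add: linear_add[OF ly] linear_diff[OF ly] linear_scale[OF ly] c)
    qed
    have gTk: "g y ((T ^^ k) v) = (T ^^ k) (g y v)" if y: "y \<ge> 0" for y v k
      by (induction k arbitrary: v) (simp_all add: gT[OF y] funpow_Suc_right del: funpow.simps)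
    have invK: "\<forall>y\<ge>0. g y ` K \<subseteq> K"
    proof (intro allI impI subsetI)
      fix y z assume y: "y \<ge> 0" and "z \<in> g y ` K"
      then obtain v where v: "v \<in> W" "(T ^^ N) v = 0" "z = g y v" unfolding K_def by blast
      have "g y v \<in> W" using inv y v by blast
      moreover have "(T ^^ N) (g y v) = 0" using gTk[OF y, of N v] v linear_0[OF sg_linear[OF sg y]] by simp
      ultimately show "z \<in> K" unfolding K_def v by simp
    qed
    have invR: "\<forall>y\<ge>0. g y ` R \<subseteq> R"
    proof (intro allI impI subsetI)
      fix y z assume y: "y \<ge> 0" and "z \<in> g y ` R"
      then obtain v where v: "v \<in> W" "z = g y ((T ^^ N) v)" unfolding R_def by blast
      have "g y v \<in> W" using inv y v by blast
      thus "z \<in> R" unfolding R_def v gTk[OF y] by blast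
    qed
    have Knz: "K \<noteq> {0}"
    proof -
      obtain u w where uw: "u \<in> W" "w \<in> W" "u \<noteq> 0 \<or> w \<noteq> 0" "epair A \<mu>0 u w"
        using ev0 unfolding cev_iff A_def by blast
      have "epair T (pq \<mu>0 \<mu>0) u w" unfolding T_def by (rule epair_quad[OF linA uw(4)])
      hence "epair (T ^^ N) ((pq \<mu>0 \<mu>0) ^ N) u w" by (rule epair_pow[OF linT])
      hence "(T ^^ N) u = 0" "(T ^^ N) w = 0" using Npos unfolding pq_self epair_def by simp_all
      hence "u \<in> K" "w \<in> K" using uw unfolding K_def by auto
      thus ?thesis using uw(3) by auto
    qed
    have Rnz: "R \<noteq> {0}"
    proof
      assume R0: "R = {0}"
      obtain \<nu> where nu: "complex_eigenvalue_on (g x) W \<nu>" "\<nu> \<noteq> \<mu>0" "\<nu> \<noteq> cnj \<mu>0"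
        using bad[of \<mu>0] by blast
      obtain u w where uw: "u \<in> W" "w \<in> W" "u \<noteq> 0 \<or> w \<noteq> 0" "epair A \<nu> u w"
        using nu(1) unfolding cev_iff A_def by blast
      have "epair T (pq \<mu>0 \<nu>) u w" unfolding T_def by (rule epair_quad[OF linA uw(4)])
      hence e: "epair (T ^^ N) ((pq \<mu>0 \<nu>) ^ N) u w" by (rule epair_pow[OF linT])
      have "(T ^^ N) u \<in> R" "(T ^^ N) w \<in> R" unfolding R_def using uw by auto
      hence z: "(T ^^ N) u = 0" "(T ^^ N) w = 0" using R0 by auto
      have "pq \<mu>0 \<nu> ^ N = 0"
      proof (rule ccontr)
        assume "pq \<mu>0 \<nu> ^ N \<noteq> 0"
        hence "u = 0 \<and> w = 0" using epair_kill[OF e z] by blast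
        thus False using uw(3) by simp
      qed
      hence "pq \<mu>0 \<nu> = 0" by simp
      hence "\<nu> = \<mu>0 \<or> \<nu> = cnj \<mu>0" by (rule pq_zero)
      thus False using nu by simp
    qed
    have subK: "subspace K" and subR: "subspace R" and KW: "K \<subseteq> W" and RW: "R \<subseteq> W"
      and KR: "K \<inter> R \<subseteq> {0}" and KRsum: "\<forall>v\<in>W. \<exists>k\<in>K. \<exists>r\<in>R. v = k + r"
      using F by auto
    obtain r where r: "r \<in> R" "r \<noteq> 0" using Rnz subR real_vector.subspace_0 by blast
    obtain k where k: "k \<in> K" "k \<noteq> 0" using Knz subK real_vector.subspace_0 by blast
    have "K \<noteq> W" using r KR RW by blast
    hence "K \<subset> W" using KW by blast
    hence dK: "dim K < dim W"
      using subK sW by (metis dim_psubset real_vector.span_eq_iff)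
    have "R \<noteq> W" using k KR KW by blast
    hence "R \<subset> W" using RW by blast
    hence dR: "dim R < dim W"
      using subR sW by (metis dim_psubset real_vector.span_eq_iff)
    obtain n1 V1 where d1: "decomp K n1 V1" "\<forall>i<n1. good g (V1 i)"
      using less.hyps[OF dK subK Knz invK] by blast
    obtain n2 V2 where d2: "decomp R n2 V2" "\<forall>i<n2. good g (V2 i)"
      using less.hyps[OF dR subR Rnz invR] by blast
    have "decomp W (n1 + n2) (\<lambda>i. if i < n1 then V1 i else V2 (i - n1))"
      by (rule decomp_combine[OF subK subR KR KW RW KRsum d1(1) d2(1)])
    moreover have "\<forall>i<n1+n2. good g (if i < n1 then V1 i else V2 (i - n1))"
      using d1(2) d2(2) by auto
    ultimately show ?thesis by blast
  qed
qed



lemma good_opts: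
  fixes g :: "real \<Rightarrow> 'a::euclidean_space \<Rightarrow> 'a"
  assumes sg: "lin_semigroup g" and gd: "good g V"
  shows "(\<forall>x\<ge>0. \<exists>lam::real. lam \<ge> 0 \<and>
           (\<forall>\<mu>. complex_eigenvalue_on (g x) V \<mu> \<longleftrightarrow> \<mu> = complex_of_real lam))
       \<or>
       (\<exists>lam::real \<Rightarrow> complex.
           (\<forall>x\<ge>0. \<forall>\<mu>. complex_eigenvalue_on (g x) V \<mu> \<longrightarrow> \<mu> = lam x \<or> \<mu> = cnj (lam x)) \<and>
           (\<exists>x\<ge>0. lam x \<notin> \<real>))"
proof -
  have prim: "\<forall>x\<ge>0. \<exists>\<mu>. \<forall>\<nu>. complex_eigenvalue_on (g x) V \<nu> \<longrightarrow> \<nu> = \<mu> \<or> \<nu> = cnj \<mu>"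
    using gd unfolding good_def by blast
  then obtain mu where mu: "\<And>x \<nu>. x \<ge> 0 \<Longrightarrow> complex_eigenvalue_on (g x) V \<nu> \<Longrightarrow> \<nu> = mu x \<or> \<nu> = cnj (mu x)"
    by metis
  show ?thesis
  proof (cases "\<exists>x\<ge>0. \<exists>\<mu>. \<mu> \<notin> \<real> \<and> (\<forall>\<nu>. complex_eigenvalue_on (g x) V \<nu> \<longrightarrow> \<nu> = \<mu> \<or> \<nu> = cnj \<mu>)")
    case True
    then obtain x0 m where x0: "x0 \<ge> 0" "m \<notin> \<real>"
      "\<forall>\<nu>. complex_eigenvalue_on (g x0) V \<nu> \<longrightarrow> \<nu> = m \<or> \<nu> = cnj m" by blast
    define lam where "lam y = (if y = x0 then m else mu y)" for y
    have "\<forall>x\<ge>0. \<forall>\<mu>. complex_eigenvalue_on (g x) V \<mu> \<longrightarrow> \<mu> = lam x \<or> \<mu> = cnj (lam x)"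
      unfolding lam_def using x0 mu by auto
    moreover have "\<exists>x\<ge>0. lam x \<notin> \<real>" using x0 unfolding lam_def by auto
    ultimately show ?thesis by blast
  next
    case False
    have exact: "\<forall>\<nu>. complex_eigenvalue_on (g x) V \<nu> \<longleftrightarrow> \<nu> = of_real (Re (mu x))" if x: "x \<ge> 0" for x
    proof -
      have "\<exists>\<nu>. complex_eigenvalue_on (g x) V \<nu>"
      proof (rule ccontr)
        assume "\<not> ?thesis"
        hence "\<forall>\<nu>. complex_eigenvalue_on (g x) V \<nu> \<longrightarrow> \<nu> = \<i> \<or> \<nu> = cnj \<i>" by blast
        moreover have "\<i> \<notin> \<real>" by (simp add: complex_is_Real_iff)
        ultimately show False using False x by blast
      qed
      then obtain \<nu>0 where nu0: "complex_eigenvalue_on (g x) V \<nu>0" by blast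
      have "mu x \<in> \<real>"
      proof (rule ccontr)
        assume "mu x \<notin> \<real>"
        thus False using False x mu by blast
      qed
      hence mr: "mu x = of_real (Re (mu x))" "cnj (mu x) = mu x"
        by (simp_all add: complex_is_Real_iff complex_eq_iff)
      show ?thesis
      proof
        fix \<nu>
        show "complex_eigenvalue_on (g x) V \<nu> \<longleftrightarrow> \<nu> = of_real (Re (mu x))"
        proof
          assume "complex_eigenvalue_on (g x) V \<nu>"
          thus "\<nu> = of_real (Re (mu x))" using mu[OF x] mr by metis
        next
          assume "\<nu> = of_real (Re (mu x))"
          moreover have "\<nu>0 = of_real (Re (mu x))" using mu[OF x nu0] mr by metis
          ultimately show "complex_eigenvalue_on (g x) V \<nu>" using nu0 by simp
        qed
      qed
    qed
    have "\<forall>x\<ge>0. \<exists>lam::real. lam \<ge> 0 \<and>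
           (\<forall>\<mu>. complex_eigenvalue_on (g x) V \<mu> \<longleftrightarrow> \<mu> = complex_of_real lam)"
    proof (intro allI impI)
      fix x :: real assume x: "x \<ge> 0"
      have h: "x / 2 \<ge> 0" using x by simp
      have "complex_eigenvalue_on (g (x/2)) V (of_real (Re (mu (x/2))))" using exact[OF h] by blast
      then obtain u w where uw: "u \<in> V" "w \<in> V" "u \<noteq> 0 \<or> w \<noteq> 0"
        "epair (g (x/2)) (of_real (Re (mu (x/2)))) u w" unfolding cev_iff by blast
      define a where "a = Re (mu (x/2))"
      have gu: "g (x/2) u = a *\<^sub>R u" "g (x/2) w = a *\<^sub>R w" using uw(4) unfolding epair_def a_def by simp_all
      have gx: "g x = g (x/2) \<circ> g (x/2)"
        using sg h unfolding lin_semigroup_def by (metis field_sum_of_halves)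
      have lh: "linear (g (x/2))" using sg h by (rule sg_linear)
      have "g x u = (a*a) *\<^sub>R u" "g x w = (a*a) *\<^sub>R w"
        unfolding gx by (simp_all add: gu linear_scale[OF lh])
      hence "epair (g x) (of_real (a*a)) u w" unfolding epair_def by simp
      hence "complex_eigenvalue_on (g x) V (of_real (a*a))" unfolding cev_iff using uw by blast
      hence "of_real (a*a) = (of_real (Re (mu x)) :: complex)" using exact[OF x] by blast
      hence "Re (mu x) = a * a" by (metis of_real_eq_iff)
      hence "Re (mu x) \<ge> 0" by simp
      thus "\<exists>lam::real. lam \<ge> 0 \<and> (\<forall>\<mu>. complex_eigenvalue_on (g x) V \<mu> \<longleftrightarrow> \<mu> = complex_of_real lam)"
        using exact[OF x] by blast
    qed
    thus ?thesis by blast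
  qed
qed

theorem mainTheorem2:
  fixes g :: "real \<Rightarrow> 'a::euclidean_space \<Rightarrow> 'a"
  assumes "lin_semigroup g"
  shows "\<exists>n Vs. is_direct_sum n Vs \<and>
    (\<forall>i<n. dim (Vs i) \<ge> 1 \<and> (\<forall>x\<ge>0. g x ` Vs i \<subseteq> Vs i) \<and>
      ((\<forall>x\<ge>0. \<exists>lam::real. lam \<ge> 0 \<and>
           (\<forall>\<mu>. complex_eigenvalue_on (g x) (Vs i) \<mu> \<longleftrightarrow> \<mu> = complex_of_real lam))
       \<or>
       (\<exists>lam::real \<Rightarrow> complex.
           (\<forall>x\<ge>0. \<forall>\<mu>. complex_eigenvalue_on (g x) (Vs i) \<mu> \<longrightarrow> \<mu> = lam x \<or> \<mu> = cnj (lam x)) \<and>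
           (\<exists>x\<ge>0. lam x \<notin> \<real>))))"
proof -
  have nz: "(UNIV :: 'a set) \<noteq> {0}"
  proof -
    obtain b :: 'a where "b \<in> Basis" using nonempty_Basis by blast
    hence "b \<noteq> 0" by (rule nonzero_Basis)
    thus ?thesis by blast
  qed
  obtain n Vs where d: "decomp UNIV n Vs" and gd: "\<forall>i<n. good g (Vs i)"
    using main_ind[OF assms real_vector.subspace_UNIV nz] by blast
  have "is_direct_sum n Vs" using d by (rule decomp_direct)
  moreover have "\<forall>i<n. dim (Vs i) \<ge> 1 \<and> (\<forall>x\<ge>0. g x ` Vs i \<subseteq> Vs i) \<and>
      ((\<forall>x\<ge>0. \<exists>lam::real. lam \<ge> 0 \<and>
           (\<forall>\<mu>. complex_eigenvalue_on (g x) (Vs i) \<mu> \<longleftrightarrow> \<mu> = complex_of_real lam))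
       \<or>
       (\<exists>lam::real \<Rightarrow> complex.
           (\<forall>x\<ge>0. \<forall>\<mu>. complex_eigenvalue_on (g x) (Vs i) \<mu> \<longrightarrow> \<mu> = lam x \<or> \<mu> = cnj (lam x)) \<and>
           (\<exists>x\<ge>0. lam x \<notin> \<real>)))"
  proof (intro allI impI)
    fix i assume i: "i < n"
    hence gi: "good g (Vs i)" using gd by blast
    have "Vs i \<noteq> {0}" "subspace (Vs i)" using gi unfolding good_def by auto
    hence "\<not> Vs i \<subseteq> {0}" using real_vector.subspace_0 by blast
    hence "dim (Vs i) \<noteq> 0" by (simp add: dim_eq_0)
    hence D: "dim (Vs i) \<ge> 1" by linarith
    have I: "\<forall>x\<ge>0. g x ` Vs i \<subseteq> Vs i" using gi unfolding good_def by blast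
    have O: "(\<forall>x\<ge>0. \<exists>lam::real. lam \<ge> 0 \<and>
           (\<forall>\<mu>. complex_eigenvalue_on (g x) (Vs i) \<mu> \<longleftrightarrow> \<mu> = complex_of_real lam))
       \<or>
       (\<exists>lam::real \<Rightarrow> complex.
           (\<forall>x\<ge>0. \<forall>\<mu>. complex_eigenvalue_on (g x) (Vs i) \<mu> \<longrightarrow> \<mu> = lam x \<or> \<mu> = cnj (lam x)) \<and>
           (\<exists>x\<ge>0. lam x \<notin> \<real>))"
      by (rule good_opts[OF assms gi])
    show "dim (Vs i) \<ge> 1 \<and> (\<forall>x\<ge>0. g x ` Vs i \<subseteq> Vs i) \<and>
      ((\<forall>x\<ge>0. \<exists>lam::real. lam \<ge> 0 \<and>
           (\<forall>\<mu>. complex_eigenvalue_on (g x) (Vs i) \<mu> \<longleftrightarrow> \<mu> = complex_of_real lam))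
       \<or>
       (\<exists>lam::real \<Rightarrow> complex.
           (\<forall>x\<ge>0. \<forall>\<mu>. complex_eigenvalue_on (g x) (Vs i) \<mu> \<longrightarrow> \<mu> = lam x \<or> \<mu> = cnj (lam x)) \<and>
           (\<exists>x\<ge>0. lam x \<notin> \<real>)))"
      using D I O by (intro conjI)
  qed
  ultimately show ?thesis by blast
qed


end
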